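(* Let $c,d\in\mathbb{N}$, $I=\mathbb{N}^d\times[c]$, and let $L\subseteq\mathbb{Z}^{(I)}$ be a $\mathrm{Sym}$-invariant lattice. Identify $\mathbb{Z}^{(\mathbb{N}^d\times[2c])}$ with $\mathbb{Z}^{(I)}\oplus\mathbb{Z}^{(I)}$ (basis vectors $\mathbf{e}_{\mathbf{i},j}$ with $j\le c$ spanning the first summand and $\mathbf{e}_{\mathbf{i},c+j}$ corresponding to $\mathbf{e}_{\mathbf{i},j}$ in the second summand), let $\varphi:\mathbb{Z}^{(\mathbb{N}^d\times[2c])}\to\mathbb{Z}^{(I)}$, $(\mathbf{u},\mathbf{v})\mapsto\mathbf{u}-\mathbf{v}$, and $M=\varphi^{-1}(L)\cap\mathbb{Z}_{\ge0}^{(\mathbb{N}^d\times[2c])}$. Then $M$ has a finite equivariant Hilbert basis if and only if $L$ has a finite equivariant Graver basis.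
   Context: $\mathbb{N}=\{1,2,\dots\}$. $\mathbb{Z}^{(J)}$ is the free abelian group with basis $J$, $\mathbb{Z}_{\ge0}^{(J)}$ its nonnegative vectors; lattice = subgroup. $\mathrm{Sym}$ is the group of permutations of $\mathbb{N}$ fixing all but finitely many points; it acts on $\mathbb{Z}^{(\mathbb{N}^d\times[k])}$ (any $k$) by linear extension of $\sigma(\mathbf{e}_{(i_1,\dots,i_d),j})=\mathbf{e}_{(\sigma(i_1),\dots,\sigma(i_d)),j}$. $\mathbf{u}\sqsubseteq\mathbf{v}$ iff $u_iv_i\ge0$ and $|u_i|\le|v_i|$ for all $i$; the Graver basis of $L$ is the set of $\sqsubseteq$-minimal elements of $L\setminus\{\mathbf{0}\}$; $\mathcal{G}$ is an equivariant Graver basis if $\mathrm{Sym}(\mathcal{G})=\{\sigma(\mathbf{g})\}$ is the Graver basis. A Hilbert basis of a monoid is a minimal generating set w.r.t. $\mathbb{Z}_{\ge0}$-combinations; $\mathcal{H}$ is an equivariant Hilbert basis of a $\mathrm{Sym}$-invariant monoid $M$ if $\mathrm{Sym}(\mathcal{H})$ is a Hilbert basis of $M$. *)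

theory Defs
  imports Main "HOL-Library.Function_Algebras"
begin

text \<open>Indices: a d-tuple of positive naturals (a list of length d) and a colour j in [k] = {1..k}.\<close>

type_synonym idx = "nat list \<times> nat"
type_synonym vec = "idx \<Rightarrow> int"

definition Idx :: "nat \<Rightarrow> nat \<Rightarrow> idx set" where
  "Idx d k = {(is, j). length is = d \<and> (\<forall>i\<in>set is. 1 \<le> i) \<and> 1 \<le> j \<and> j \<le> k}"

definition Vec :: "nat \<Rightarrow> nat \<Rightarrow> vec set" where
  "Vec d k = {u. finite {x. u x \<noteq> 0} \<and> (\<forall>x. u x \<noteq> 0 \<longrightarrow> x \<in> Idx d k)}"

text \<open>Sym: permutations of N = {1,2,...} fixing all but finitely many points
  (as functions on nat, fixing 0).\<close>
definition Sym :: "(nat \<Rightarrow> nat) set" where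
  "Sym = {\<sigma>. bij \<sigma> \<and> \<sigma> 0 = 0 \<and> finite {i. \<sigma> i \<noteq> i}}"

text \<open>Linear extension of sigma(e_{(i1..id),j}) = e_{(sigma i1,..,sigma id),j}.\<close>
definition act :: "(nat \<Rightarrow> nat) \<Rightarrow> vec \<Rightarrow> vec" where
  "act \<sigma> u = (\<lambda>(is, j). u (map (inv \<sigma>) is, j))"

definition orbit :: "vec set \<Rightarrow> vec set" where
  "orbit G = {act \<sigma> g | \<sigma> g. \<sigma> \<in> Sym \<and> g \<in> G}"

definition lattice :: "nat \<Rightarrow> nat \<Rightarrow> vec set \<Rightarrow> bool" where
  "lattice d k L \<longleftrightarrow> L \<subseteq> Vec d k \<and> (\<lambda>_. 0) \<in> L \<and>
     (\<forall>u\<in>L. \<forall>v\<in>L. u + v \<in> L) \<and> (\<forall>u\<in>L. - u \<in> L)"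

definition sym_invariant :: "vec set \<Rightarrow> bool" where
  "sym_invariant L \<longleftrightarrow> (\<forall>\<sigma>\<in>Sym. \<forall>u\<in>L. act \<sigma> u \<in> L)"

definition conf_le :: "vec \<Rightarrow> vec \<Rightarrow> bool" (infix "\<sqsubseteq>" 50) where
  "u \<sqsubseteq> v \<longleftrightarrow> (\<forall>x. u x * v x \<ge> 0 \<and> \<bar>u x\<bar> \<le> \<bar>v x\<bar>)"

definition graver_basis :: "vec set \<Rightarrow> vec set" where
  "graver_basis L = {u \<in> L - {\<lambda>_. 0}. \<forall>v \<in> L - {\<lambda>_. 0}. v \<sqsubseteq> u \<longrightarrow> v = u}"

definition equivariant_graver_basis :: "vec set \<Rightarrow> vec set \<Rightarrow> bool" where
  "equivariant_graver_basis G L \<longleftrightarrow> orbit G = graver_basis L"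

inductive_set monoid_gen :: "vec set \<Rightarrow> vec set" for H where
  zero: "(\<lambda>_. 0) \<in> monoid_gen H"
| gen: "h \<in> H \<Longrightarrow> h \<in> monoid_gen H"
| add: "a \<in> monoid_gen H \<Longrightarrow> b \<in> monoid_gen H \<Longrightarrow> a + b \<in> monoid_gen H"

definition hilbert_basis :: "vec set \<Rightarrow> vec set \<Rightarrow> bool" where
  "hilbert_basis H M \<longleftrightarrow> monoid_gen H = M \<and> (\<forall>H'. H' \<subset> H \<longrightarrow> monoid_gen H' \<noteq> M)"

definition equivariant_hilbert_basis :: "vec set \<Rightarrow> vec set \<Rightarrow> bool" where
  "equivariant_hilbert_basis H M \<longleftrightarrow> hilbert_basis (orbit H) M"

definition phi :: "nat \<Rightarrow> vec \<Rightarrow> vec" where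
  "phi c w = (\<lambda>(is, j). if 1 \<le> j \<and> j \<le> c then w (is, j) - w (is, j + c) else 0)"

definition Mon :: "nat \<Rightarrow> nat \<Rightarrow> vec set \<Rightarrow> vec set" where
  "Mon d c L = {w \<in> Vec d (2 * c). (\<forall>x. 0 \<le> w x) \<and> phi c w \<in> L}"

end

theory Submission
  imports Defs
begin

lemma Sym_bij: "\<sigma> \<in> Sym \<Longrightarrow> bij \<sigma>" by (simp add: Sym_def)

lemma Sym_comp: assumes "\<sigma> \<in> Sym" "\<tau> \<in> Sym" shows "\<sigma> \<circ> \<tau> \<in> Sym"
proof -
  have "{i. (\<sigma> \<circ> \<tau>) i \<noteq> i} \<subseteq> {i. \<sigma> i \<noteq> i} \<union> {i. \<tau> i \<noteq> i}" by auto
  then show ?thesis using assms unfolding Sym_def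
    by (auto intro: bij_comp finite_subset)
qed

definition tr :: "nat \<Rightarrow> nat \<Rightarrow> nat \<Rightarrow> nat" where
  "tr a b = (\<lambda>x. if x = a then b else if x = b then a else x)"

lemma tr_Sym: assumes "a \<noteq> 0" "b \<noteq> 0" shows "tr a b \<in> Sym"
proof -
  have inv: "tr a b \<circ> tr a b = id" by (auto simp: tr_def)
  have "bij (tr a b)" by (rule o_bij[OF inv inv])
  moreover have "{i. tr a b i \<noteq> i} \<subseteq> {a, b}" by (auto simp: tr_def)
  ultimately show ?thesis using assms unfolding Sym_def by (auto simp: tr_def intro: finite_subset)
qed

lemma Sym_normalize:
  "\<forall>i\<in>set xs. 1 \<le> i \<Longrightarrow> \<exists>\<sigma>\<in>Sym. set (map \<sigma> xs) \<subseteq> {1..length xs}"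
proof (induction xs)
  case Nil
  have "id \<in> Sym" by (simp add: Sym_def)
  then show ?case by auto
next
  case (Cons a xs)
  then obtain \<sigma> where s: "\<sigma> \<in> Sym" "set (map \<sigma> xs) \<subseteq> {1..length xs}" by auto
  show ?case
  proof (cases "\<sigma> a \<in> set (map \<sigma> xs)")
    case True
    then show ?thesis using s by (intro bexI[of _ \<sigma>]) auto
  next
    case False
    let ?n = "Suc (length xs)"
    have a0: "a \<noteq> 0" using Cons.prems by auto
    have "\<sigma> a \<noteq> 0"
    proof
      assume "\<sigma> a = 0"
      moreover have "\<sigma> 0 = 0" using s(1) by (simp add: Sym_def)
      ultimately show False using a0 Sym_bij[OF s(1)] by (metis bij_is_inj injD)
    qed
    then have t: "tr (\<sigma> a) ?n \<in> Sym" by (intro tr_Sym) auto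
    have "set (map (tr (\<sigma> a) ?n \<circ> \<sigma>) (a # xs)) \<subseteq> {1..?n}"
    proof -
      have "tr (\<sigma> a) ?n (\<sigma> y) = \<sigma> y" if "y \<in> set xs" for y
      proof -
        have "\<sigma> y \<noteq> \<sigma> a"
        proof
          assume "\<sigma> y = \<sigma> a"
          then have "\<sigma> a \<in> set (map \<sigma> xs)" using that by (metis image_eqI set_map)
          with False show False by simp
        qed
        moreover have "\<sigma> y \<le> length xs" using s(2) that by auto
        ultimately show ?thesis by (auto simp: tr_def)
      qed
      then show ?thesis using s(2) by (auto simp: tr_def)
    qed
    then show ?thesis using Sym_comp[OF t s(1)] by (intro bexI[of _ "tr (\<sigma> a) ?n \<circ> \<sigma>"]) auto
  qed
qed

lemma Sym_inv_inv: "\<sigma> \<in> Sym \<Longrightarrow> inv (inv \<sigma>) = \<sigma>"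
  using Sym_bij inv_inv_eq by blast

lemma Sym_inv_Sym: assumes "\<sigma> \<in> Sym" shows "inv \<sigma> \<in> Sym"
proof -
  have b: "bij \<sigma>" "\<sigma> 0 = 0" "finite {i. \<sigma> i \<noteq> i}" using assms by (auto simp: Sym_def)
  have "{i. inv \<sigma> i \<noteq> i} \<subseteq> \<sigma> ` {i. \<sigma> i \<noteq> i}"
  proof
    fix i assume "i \<in> {i. inv \<sigma> i \<noteq> i}"
    moreover have e: "\<sigma> (inv \<sigma> i) = i" using b(1) by (simp add: bij_is_surj surj_f_inv_f)
    ultimately have "\<sigma> (inv \<sigma> i) \<noteq> inv \<sigma> i" by auto
    then have "inv \<sigma> i \<in> {i. \<sigma> i \<noteq> i}" by simp
    then show "i \<in> \<sigma> ` {i. \<sigma> i \<noteq> i}" using e by (intro image_eqI[where x="inv \<sigma> i"]) auto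
  qed
  moreover have "inv \<sigma> 0 = 0" using b inv_f_f[OF bij_is_inj[OF b(1)], of 0] by simp
  moreover have "finite (\<sigma> ` {i. \<sigma> i \<noteq> i})" using b(3) by simp
  ultimately have "finite {i. inv \<sigma> i \<noteq> i}" using finite_subset by blast
  moreover have "bij (inv \<sigma>)" using b(1) by (rule bij_imp_bij_inv)
  ultimately show ?thesis using \<open>inv \<sigma> 0 = 0\<close> by (simp add: Sym_def)
qed

lemma map_inv_map: "\<sigma> \<in> Sym \<Longrightarrow> map (inv \<sigma>) (map \<sigma> xs) = xs"
  using Sym_bij by (induction xs) (auto simp: bij_is_inj)

lemma map_map_inv: "\<sigma> \<in> Sym \<Longrightarrow> map \<sigma> (map (inv \<sigma>) xs) = xs"
  using Sym_bij by (induction xs) (auto simp: bij_is_surj surj_f_inv_f)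

lemma act_inv_act: "\<sigma> \<in> Sym \<Longrightarrow> act (inv \<sigma>) (act \<sigma> w) = w"
  by (auto simp: act_def Sym_inv_inv fun_eq_iff Sym_bij bij_is_inj)

lemma act_add: "act \<sigma> (a + b) = act \<sigma> a + act \<sigma> b"
  by (auto simp: act_def fun_eq_iff)

lemma act_zero: "act \<sigma> 0 = 0"
  by (auto simp: act_def fun_eq_iff)

lemma act_eq_zero: "\<sigma> \<in> Sym \<Longrightarrow> act \<sigma> w = 0 \<longleftrightarrow> w = 0"
  by (metis act_inv_act act_zero)

lemma phi_act: "phi c (act \<sigma> w) = act \<sigma> (phi c w)"
  by (auto simp: act_def phi_def fun_eq_iff)

lemma Sym_pos: "\<sigma> \<in> Sym \<Longrightarrow> i \<noteq> 0 \<Longrightarrow> inv \<sigma> i \<noteq> 0"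
proof
  assume s: "\<sigma> \<in> Sym" and i: "i \<noteq> 0" and "inv \<sigma> i = 0"
  then have "\<sigma> 0 = i" using surj_f_inv_f[OF bij_is_surj[OF Sym_bij[OF s]], of i] by simp
  then show False using s i by (simp add: Sym_def)
qed

lemma Sym_inv0: "\<sigma> \<in> Sym \<Longrightarrow> inv \<sigma> 0 = 0"
  using Sym_inv_Sym[of \<sigma>] by (simp add: Sym_def)

lemma act_Vec: assumes "\<sigma> \<in> Sym" "w \<in> Vec d k" shows "act \<sigma> w \<in> Vec d k"
proof -
  let ?S = "{x. w x \<noteq> 0}"
  have fin: "finite ?S" using assms(2) by (simp add: Vec_def)
  have "{x. act \<sigma> w x \<noteq> 0} \<subseteq> (\<lambda>(xs, j). (map \<sigma> xs, j)) ` ?S"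
  proof
    fix x assume "x \<in> {x. act \<sigma> w x \<noteq> 0}"
    then obtain xs j where x: "x = (xs, j)" "w (map (inv \<sigma>) xs, j) \<noteq> 0"
      by (cases x) (auto simp: act_def)
    then show "x \<in> (\<lambda>(xs, j). (map \<sigma> xs, j)) ` ?S"
      using map_map_inv[OF assms(1), of "xs"] by (auto intro!: image_eqI[of _ _ "(map (inv \<sigma>) xs, j)"])
  qed
  then have "finite {x. act \<sigma> w x \<noteq> 0}" using fin finite_subset by blast
  moreover have "x \<in> Idx d k" if nz: "act \<sigma> w x \<noteq> 0" for x
  proof -
    obtain xs j where x: "x = (xs, j)" "w (map (inv \<sigma>) xs, j) \<noteq> 0"
      using nz by (cases x) (auto simp: act_def)
    then have "(map (inv \<sigma>) xs, j) \<in> Idx d k" using assms(2) by (auto simp: Vec_def)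
    moreover have "1 \<le> i" if "1 \<le> inv \<sigma> i" for i
      using that Sym_inv0[OF assms(1)] by (cases "i = 0") auto
    ultimately show ?thesis using x by (auto simp: Idx_def)
  qed
  ultimately show ?thesis by (auto simp: Vec_def)
qed

lemma lam0: "(\<lambda>_. 0::int) = (0::vec)" by (simp add: zero_fun_def)

definition Irr :: "vec set \<Rightarrow> vec set" where
  "Irr M = {w \<in> M. w \<noteq> 0 \<and> (\<forall>a\<in>M. \<forall>b\<in>M. w = a + b \<longrightarrow> a = 0 \<or> b = 0)}"

definition posmon :: "vec set \<Rightarrow> bool" where
  "posmon M \<longleftrightarrow> 0 \<in> M \<and> (\<forall>a\<in>M. \<forall>b\<in>M. a + b \<in> M) \<and>
     (\<forall>w\<in>M. (\<forall>x. 0 \<le> w x) \<and> finite {x. w x \<noteq> 0})"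

definition sz :: "vec \<Rightarrow> int" where "sz w = (\<Sum>x\<in>{x. w x \<noteq> 0}. w x)"

lemma monoid_gen_mono: assumes "A \<subseteq> B" shows "monoid_gen A \<subseteq> monoid_gen B"
proof
  fix x assume "x \<in> monoid_gen A"
  then show "x \<in> monoid_gen B" using assms
    by (induction rule: monoid_gen.induct) (auto intro: monoid_gen.intros)
qed

lemma monoid_gen_sub: assumes "posmon M" "K \<subseteq> M" shows "monoid_gen K \<subseteq> M"
proof
  fix x assume "x \<in> monoid_gen K"
  then show "x \<in> M" using assms
    by (induction rule: monoid_gen.induct) (auto simp: posmon_def lam0)
qed

lemma irr_in_gen: assumes "posmon M" "K \<subseteq> M" "w \<in> monoid_gen K" "w \<in> Irr M" shows "w \<in> K"
  using assms(3,4)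
proof (induction rule: monoid_gen.induct)
  case zero then show ?case by (simp add: Irr_def lam0)
next
  case (gen h) then show ?case by simp
next
  case (add a b)
  have "a \<in> M" "b \<in> M" using add.hyps monoid_gen_sub[OF assms(1,2)] by auto
  then have "a = 0 \<or> b = 0" using add.prems unfolding Irr_def by blast
  then show ?case using add by auto
qed

lemma sz_split: assumes "posmon M" "a \<in> M" "b \<in> M" "b \<noteq> 0" shows "sz a < sz (a + b)"
proof -
  have pa: "\<forall>x. 0 \<le> a x" "finite {x. a x \<noteq> 0}" and pb: "\<forall>x. 0 \<le> b x" "finite {x. b x \<noteq> 0}"
    using assms unfolding posmon_def by auto
  let ?S = "{x. (a + b) x \<noteq> 0}"
  have SU: "?S \<subseteq> {x. a x \<noteq> 0} \<union> {x. b x \<noteq> 0}" by auto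
  have fS: "finite ?S" using SU pa pb finite_subset by blast
  have Sa: "{x. a x \<noteq> 0} \<subseteq> ?S" using pa pb by (auto simp: add_nonneg_eq_0_iff)
  have Sb: "{x. b x \<noteq> 0} \<subseteq> ?S" using pa pb by (auto simp: add_nonneg_eq_0_iff)
  have "sz (a + b) = (\<Sum>x\<in>?S. a x) + (\<Sum>x\<in>?S. b x)" by (simp add: sz_def sum.distrib)
  moreover have "(\<Sum>x\<in>?S. a x) = sz a" unfolding sz_def
    by (rule sum.mono_neutral_right[OF fS Sa]) auto
  moreover have "(\<Sum>x\<in>?S. b x) = sz b" unfolding sz_def
    by (rule sum.mono_neutral_right[OF fS Sb]) auto
  moreover have "sz b > 0"
  proof -
    obtain x where x: "b x \<noteq> 0" using assms(4) by (auto simp: fun_eq_iff)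
    have "b x \<le> sz b" unfolding sz_def
      by (rule member_le_sum) (use x pb in auto)
    then show ?thesis using x pb(1) by (metis less_le order_less_le_trans)
  qed
  ultimately show ?thesis by simp
qed

lemma gen_irr: assumes "posmon M" shows "monoid_gen (Irr M) = M"
proof
  show "monoid_gen (Irr M) \<subseteq> M" by (rule monoid_gen_sub[OF assms]) (auto simp: Irr_def)
next
  have "\<forall>w. w \<in> M \<longrightarrow> nat (sz w) = n \<longrightarrow> w \<in> monoid_gen (Irr M)" for n
  proof (induction n rule: less_induct)
    case (less n)
    show ?case
    proof (intro allI impI)
      fix w assume w: "w \<in> M" "nat (sz w) = n"
      show "w \<in> monoid_gen (Irr M)"
      proof (cases "w \<in> Irr M")
        case True then show ?thesis by (rule monoid_gen.gen)
      next
        case False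
        show ?thesis
        proof (cases "w = 0")
          case True then show ?thesis using monoid_gen.zero lam0 by metis
        next
          case nz: False
          then obtain a b where ab: "a \<in> M" "b \<in> M" "w = a + b" "a \<noteq> 0" "b \<noteq> 0"
            using False w unfolding Irr_def by blast
          have sa: "sz a < sz w" using sz_split[OF assms ab(1,2,5)] ab(3) by simp
          have sb: "sz b < sz w" using sz_split[OF assms ab(2,1,4)] ab(3) by (simp add: add.commute)
          have "0 \<le> sz a" "0 \<le> sz b" using ab(1,2) assms unfolding posmon_def sz_def
            by (auto intro: sum_nonneg)
          then have "nat (sz a) < n" "nat (sz b) < n" using sa sb w(2) by auto
          then have "a \<in> monoid_gen (Irr M)" "b \<in> monoid_gen (Irr M)" using less ab by auto
          then show ?thesis using ab(3) monoid_gen.add by blast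
        qed
      qed
    qed
  qed
  then show "M \<subseteq> monoid_gen (Irr M)" by blast
qed

lemma hilbert_iff: assumes "posmon M" shows "hilbert_basis K M \<longleftrightarrow> K = Irr M"
proof
  assume h: "hilbert_basis K M"
  then have gK: "monoid_gen K = M" by (simp add: hilbert_basis_def)
  have KM: "K \<subseteq> M" using gK monoid_gen.gen by blast
  have "Irr M \<subseteq> K" using irr_in_gen[OF assms KM] gK Irr_def by blast
  moreover have "K \<subseteq> Irr M"
  proof
    fix k assume k: "k \<in> K"
    show "k \<in> Irr M"
    proof (rule ccontr)
      assume nk: "k \<notin> Irr M"
      have "Irr M \<subseteq> K - {k}" using \<open>Irr M \<subseteq> K\<close> nk by auto
      then have "M \<subseteq> monoid_gen (K - {k})" using monoid_gen_mono gen_irr[OF assms] by metis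
      moreover have "monoid_gen (K - {k}) \<subseteq> M" using monoid_gen_mono[of "K - {k}" K] gK by auto
      ultimately have "monoid_gen (K - {k}) = M" by auto
      moreover have "K - {k} \<subset> K" using k by auto
      ultimately show False using h by (auto simp: hilbert_basis_def)
    qed
  qed
  ultimately show "K = Irr M" by auto
next
  assume K: "K = Irr M"
  show "hilbert_basis K M" unfolding hilbert_basis_def
  proof (intro conjI allI impI)
    show "monoid_gen K = M" using K gen_irr[OF assms] by simp
    fix H' assume H': "H' \<subset> K"
    show "monoid_gen H' \<noteq> M"
    proof
      assume g: "monoid_gen H' = M"
      obtain i where i: "i \<in> K" "i \<notin> H'" using H' by auto
      have "H' \<subseteq> M" using H' K by (auto simp: Irr_def)
      then have "i \<in> H'" using irr_in_gen[OF assms, of H' i] g i K by (auto simp: Irr_def)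
      then show False using i by simp
    qed
  qed
qed

definition lift :: "nat \<Rightarrow> vec \<Rightarrow> vec" where
  "lift c g = (\<lambda>(xs, j). if 1 \<le> j \<and> j \<le> c then max (g (xs, j)) 0
      else if c < j \<and> j \<le> 2 * c then max (- g (xs, j - c)) 0 else 0)"

definition diag :: "nat \<Rightarrow> idx \<Rightarrow> vec" where
  "diag c x = (\<lambda>y. if y = x \<or> y = (fst x, snd x + c) then 1 else 0)"

lemma Vec_zero: "0 \<in> Vec d k" by (simp add: Vec_def)

lemma Vec_fin0: "a \<in> Vec d k \<Longrightarrow> finite {x. a x \<noteq> 0}"
  unfolding Vec_def by blast

lemma Vec_add: assumes "a \<in> Vec d k" "b \<in> Vec d k" shows "a + b \<in> Vec d k"
proof -
  have sub: "{x. (a + b) x \<noteq> 0} \<subseteq> {x. a x \<noteq> 0} \<union> {x. b x \<noteq> 0}" by auto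
  have "finite ({x. a x \<noteq> 0} \<union> {x. b x \<noteq> 0})" using assms by (simp add: Vec_fin0)
  then have "finite {x. (a + b) x \<noteq> 0}" using sub by (rule finite_subset[rotated])
  moreover have "x \<in> Idx d k" if "(a + b) x \<noteq> 0" for x
  proof (rule ccontr)
    assume "x \<notin> Idx d k"
    then have "a x = 0" "b x = 0" using assms unfolding Vec_def by blast+
    then show False using that by simp
  qed
  ultimately show ?thesis unfolding Vec_def by blast
qed

lemma Vec_uminus: "a \<in> Vec d k \<Longrightarrow> - a \<in> Vec d k" by (simp add: Vec_def)

lemma Vec_diff: "a \<in> Vec d k \<Longrightarrow> b \<in> Vec d k \<Longrightarrow> a - b \<in> Vec d k"
  using Vec_add[of a d k "- b"] Vec_uminus[of b] by simp

lemma Vec_out: "a \<in> Vec d k \<Longrightarrow> x \<notin> Idx d k \<Longrightarrow> a x = 0"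
  unfolding Vec_def by blast

lemma Vec_fin: "a \<in> Vec d k \<Longrightarrow> finite {x. a x \<noteq> 0}"
  unfolding Vec_def by blast

lemma Idx_mono: "k \<le> k' \<Longrightarrow> Idx d k \<subseteq> Idx d k'" by (auto simp: Idx_def)

lemma phi_add: "phi c (a + b) = phi c a + phi c b" by (auto simp: phi_def fun_eq_iff)
lemma phi_diff: "phi c (a - b) = phi c a - phi c b" by (auto simp: phi_def fun_eq_iff)
lemma phi_zero: "phi c 0 = 0" by (auto simp: phi_def fun_eq_iff)

context
  fixes d c :: nat and L :: "vec set"
  assumes latt: "lattice d c L" and symL: "sym_invariant L"
begin

lemma L0: "0 \<in> L" using latt by (simp add: lattice_def lam0)
lemma Ladd: "a \<in> L \<Longrightarrow> b \<in> L \<Longrightarrow> a + b \<in> L" using latt by (simp add: lattice_def)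
lemma Lneg: "a \<in> L \<Longrightarrow> - a \<in> L" using latt by (simp add: lattice_def)
lemma Ldiff: "a \<in> L \<Longrightarrow> b \<in> L \<Longrightarrow> a - b \<in> L" using Ladd[of a "- b"] Lneg[of b] by simp
lemma LVec: "a \<in> L \<Longrightarrow> a \<in> Vec d c" using latt by (auto simp: lattice_def)

lemma posmon_Mon: "posmon (Mon d c L)"
  unfolding posmon_def Mon_def
  by (auto simp: Vec_zero phi_zero L0 Vec_add phi_add Ladd Vec_fin)

lemma Mon_add: "a \<in> Mon d c L \<Longrightarrow> b \<in> Mon d c L \<Longrightarrow> a + b \<in> Mon d c L"
  using posmon_Mon by (simp add: posmon_def)

lemma act_Mon: "\<sigma> \<in> Sym \<Longrightarrow> w \<in> Mon d c L \<Longrightarrow> act \<sigma> w \<in> Mon d c L"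
  using symL unfolding Mon_def sym_invariant_def
  by (auto simp: act_Vec phi_act) (auto simp: act_def)

lemma Irr_inv: assumes s: "\<sigma> \<in> Sym" and w: "w \<in> Irr (Mon d c L)"
  shows "act \<sigma> w \<in> Irr (Mon d c L)"
proof -
  let ?M = "Mon d c L"
  have "act \<sigma> w \<in> ?M" using w act_Mon[OF s] by (auto simp: Irr_def)
  moreover have "act \<sigma> w \<noteq> 0" using w act_eq_zero[OF s] by (auto simp: Irr_def)
  moreover have "a = 0 \<or> b = 0" if ab: "a \<in> ?M" "b \<in> ?M" "act \<sigma> w = a + b" for a b
  proof -
    have si: "inv \<sigma> \<in> Sym" using Sym_inv_Sym[OF s] .
    have "w = act (inv \<sigma>) (act \<sigma> w)" using act_inv_act[OF s] by simp
    also have "\<dots> = act (inv \<sigma>) a + act (inv \<sigma>) b" unfolding ab(3) by (rule act_add)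
    finally have "w = act (inv \<sigma>) a + act (inv \<sigma>) b" .
    moreover have "act (inv \<sigma>) a \<in> ?M" "act (inv \<sigma>) b \<in> ?M" using act_Mon[OF si] ab by auto
    ultimately have "act (inv \<sigma>) a = 0 \<or> act (inv \<sigma>) b = 0" using w by (auto simp: Irr_def)
    then show ?thesis using act_eq_zero[OF si] by auto
  qed
  ultimately show ?thesis by (auto simp: Irr_def)
qed

lemma lift_Vec: assumes "g \<in> L" shows "lift c g \<in> Vec d (2 * c)"
proof -
  have gV: "g \<in> Vec d c" using LVec assms .
  let ?S = "{x. g x \<noteq> 0}"
  have sub: "{x. lift c g x \<noteq> 0} \<subseteq> ?S \<union> (\<lambda>(xs, j). (xs, j + c)) ` ?S"
  proof
    fix x assume "x \<in> {x. lift c g x \<noteq> 0}"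
    then obtain xs j where x: "x = (xs, j)" "lift c g (xs, j) \<noteq> 0" by (cases x) auto
    show "x \<in> ?S \<union> (\<lambda>(xs, j). (xs, j + c)) ` ?S"
    proof (cases "1 \<le> j \<and> j \<le> c")
      case True then show ?thesis using x by (auto simp: lift_def split: if_splits)
    next
      case False
      then have "c < j" "j \<le> 2 * c" "g (xs, j - c) \<noteq> 0" using x by (auto simp: lift_def split: if_splits)
      then show ?thesis using x by (auto intro!: image_eqI[of _ _ "(xs, j - c)"])
    qed
  qed
  have "finite ?S" using gV by (simp add: Vec_def)
  then have "finite (?S \<union> (\<lambda>(xs, j). (xs, j + c)) ` ?S)" by simp
  then have "finite {x. lift c g x \<noteq> 0}" by (rule finite_subset[OF sub])
  moreover have "x \<in> Idx d (2 * c)" if nz: "lift c g x \<noteq> 0" for x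
  proof -
    obtain xs j where x: "x = (xs, j)" by (cases x)
    show ?thesis
    proof (cases "1 \<le> j \<and> j \<le> c")
      case True
      then have "g (xs, j) \<noteq> 0" using nz x by (auto simp: lift_def)
      then have "(xs, j) \<in> Idx d c" using gV by (auto simp: Vec_def)
      then show ?thesis using x by (auto simp: Idx_def)
    next
      case False
      then have "c < j" "j \<le> 2 * c" "g (xs, j - c) \<noteq> 0" using x nz by (auto simp: lift_def split: if_splits)
      moreover then have "(xs, j - c) \<in> Idx d c" using gV by (auto simp: Vec_def)
      ultimately show ?thesis using x by (auto simp: Idx_def)
    qed
  qed
  ultimately show ?thesis by (auto simp: Vec_def)
qed

lemma phi_lift: assumes "g \<in> L" shows "phi c (lift c g) = g"
proof -
  have gV: "g \<in> Vec d c" using LVec assms .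
  show ?thesis
  proof (rule ext, clarify)
    fix xs j
    show "phi c (lift c g) (xs, j) = g (xs, j)"
    proof (cases "1 \<le> j \<and> j \<le> c")
      case True then show ?thesis by (auto simp: phi_def lift_def)
    next
      case False
      then have "(xs, j) \<notin> Idx d c" by (auto simp: Idx_def)
      then show ?thesis using False Vec_out[OF gV] by (auto simp: phi_def)
    qed
  qed
qed

lemma lift_Mon: "g \<in> L \<Longrightarrow> lift c g \<in> Mon d c L"
  using lift_Vec phi_lift unfolding Mon_def by (auto simp: lift_def)

lemma lift_act: "lift c (act \<sigma> g) = act \<sigma> (lift c g)"
  by (auto simp: lift_def act_def fun_eq_iff)

lemma map_inv_eq: assumes "\<sigma> \<in> Sym" shows "(map (inv \<sigma>) ys = xs) \<longleftrightarrow> (ys = map \<sigma> xs)"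
proof
  assume "map (inv \<sigma>) ys = xs"
  then have "map \<sigma> xs = map \<sigma> (map (inv \<sigma>) ys)" by simp
  also have "\<dots> = ys" by (rule map_map_inv[OF assms])
  finally show "ys = map \<sigma> xs" by simp
next
  assume "ys = map \<sigma> xs"
  then show "map (inv \<sigma>) ys = xs" using map_inv_map[OF assms] by simp
qed

lemma act_diag: assumes "\<sigma> \<in> Sym" shows "act \<sigma> (diag c (xs, j)) = diag c (map \<sigma> xs, j)"
proof (rule ext, clarify)
  fix ys k
  show "act \<sigma> (diag c (xs, j)) (ys, k) = diag c (map \<sigma> xs, j) (ys, k)"
    unfolding act_def diag_def using map_inv_eq[OF assms, of ys xs] by simp
qed

lemma diag_Mon: assumes "x \<in> Idx d c" "1 \<le> c" shows "diag c x \<in> Mon d c L"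
proof -
  obtain xs j where x: "x = (xs, j)" by (cases x)
  have "{y. diag c x y \<noteq> 0} \<subseteq> {x, (fst x, snd x + c)}" by (auto simp: diag_def)
  then have "finite {y. diag c x y \<noteq> 0}" by (rule finite_subset) simp
  moreover have "y \<in> Idx d (2 * c)" if "diag c x y \<noteq> 0" for y
  proof -
    have "y = (xs, j) \<or> y = (xs, j + c)" using that x by (auto simp: diag_def split: if_splits)
    moreover have "length xs = d" "\<forall>i\<in>set xs. 1 \<le> i" "1 \<le> j" "j \<le> c" using assms x by (auto simp: Idx_def)
    ultimately show ?thesis by (auto simp: Idx_def)
  qed
  moreover have "phi c (diag c x) = 0" using x assms(1) unfolding Idx_def by (auto simp: phi_def diag_def fun_eq_iff)
  ultimately show ?thesis unfolding Mon_def Vec_def using L0 by (auto simp: diag_def)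
qed

end

lemma conf_cases: fixes v g :: int
  assumes "0 \<le> v * g" "\<bar>v\<bar> \<le> \<bar>g\<bar>" shows "(0 \<le> v \<and> v \<le> g) \<or> (g \<le> v \<and> v \<le> 0)"
  using assms by (cases "0 \<le> g"; cases "0 \<le> v") (auto simp: zero_le_mult_iff)

context
  fixes d c :: nat and L :: "vec set"
  assumes latt: "lattice d c L" and symL: "sym_invariant L"
begin

lemma lift_conf: assumes "v \<sqsubseteq> g" shows "lift c g = lift c v + lift c (g - v)"
proof (rule ext, clarify)
  fix xs j
  have cc: "(0 \<le> v y \<and> v y \<le> g y) \<or> (g y \<le> v y \<and> v y \<le> 0)" for y
    using assms conf_cases unfolding conf_le_def by blast
  show "lift c g (xs, j) = (lift c v + lift c (g - v)) (xs, j)"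
    using cc[of "(xs, j)"] cc[of "(xs, j - c)"] by (auto simp: lift_def)
qed

lemma w_pair0:
  assumes a: "a \<in> Mon d c L" and le: "\<forall>x. a x \<le> lift c g x" and p: "phi c a = 0"
  shows "a = 0"
proof -
  have nn: "\<forall>x. 0 \<le> a x" using a by (simp add: Mon_def)
  have aV: "a \<in> Vec d (2 * c)" using a by (simp add: Mon_def)
  have both: "a (xs, j) = 0 \<and> a (xs, j + c) = 0" if j: "1 \<le> j" "j \<le> c" for xs j
  proof -
    have eq: "a (xs, j) = a (xs, j + c)" using fun_cong[OF p, of "(xs, j)"] j by (simp add: phi_def)
    have l1: "a (xs, j) \<le> max (g (xs, j)) 0" using le[rule_format, of "(xs, j)"] j by (simp add: lift_def)
    have l2: "a (xs, j + c) \<le> max (- g (xs, j)) 0" using le[rule_format, of "(xs, j + c)"] j by (simp add: lift_def)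
    show ?thesis using eq l1 l2 nn[rule_format, of "(xs, j)"] nn[rule_format, of "(xs, j + c)"] by linarith
  qed
  show ?thesis
  proof (rule ext, clarify)
    fix xs j
    show "a (xs, j) = 0 (xs, j)"
    proof (cases "1 \<le> j \<and> j \<le> c")
      case True then show ?thesis using both by simp
    next
      case F: False
      show ?thesis
      proof (cases "c < j \<and> j \<le> 2 * c")
        case True
        then have "1 \<le> j - c" "j - c \<le> c" "j - c + c = j" by auto
        then show ?thesis using both[of "j - c" xs] by simp
      next
        case False
        then have "(xs, j) \<notin> Idx d (2 * c)" using F by (auto simp: Idx_def)
        then show ?thesis using Vec_out[OF aV] by simp
      qed
    qed
  qed
qed

lemma w_conf:
  assumes a: "a \<in> Mon d c L" and le: "\<forall>x. a x \<le> lift c g x"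
  shows "phi c a \<sqsubseteq> g"
  unfolding conf_le_def
proof (intro allI, clarify)
  fix xs j
  have nn: "\<forall>x. 0 \<le> a x" using a by (simp add: Mon_def)
  show "0 \<le> phi c a (xs, j) * g (xs, j) \<and> \<bar>phi c a (xs, j)\<bar> \<le> \<bar>g (xs, j)\<bar>"
  proof (cases "1 \<le> j \<and> j \<le> c")
    case j: True
    have l1: "a (xs, j) \<le> max (g (xs, j)) 0" using le[rule_format, of "(xs, j)"] j by (simp add: lift_def)
    have l2: "a (xs, j + c) \<le> max (- g (xs, j)) 0" using le[rule_format, of "(xs, j + c)"] j by (simp add: lift_def)
    have n1: "0 \<le> a (xs, j)" "0 \<le> a (xs, j + c)" using nn by auto
    have ph: "phi c a (xs, j) = a (xs, j) - a (xs, j + c)" using j by (simp add: phi_def)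
    show ?thesis
    proof (cases "0 \<le> g (xs, j)")
      case True
      then have "a (xs, j + c) = 0" using l2 n1 by linarith
      then show ?thesis using ph True l1 n1 by auto
    next
      case False
      then have "a (xs, j) = 0" using l1 n1 by linarith
      moreover have "a (xs, j + c) * g (xs, j) \<le> 0"
        by (rule mult_nonneg_nonpos) (use n1 False in auto)
      ultimately show ?thesis using ph False l2 n1 by auto
    qed
  next
    case False then show ?thesis by (auto simp: phi_def)
  qed
qed

lemma graver_lift_Irr: assumes g: "g \<in> graver_basis L"
  shows "lift c g \<in> Irr (Mon d c L)"
proof -
  let ?M = "Mon d c L"
  have gL: "g \<in> L" and g0: "g \<noteq> 0" and gmin: "\<And>v. v \<in> L \<Longrightarrow> v \<noteq> 0 \<Longrightarrow> v \<sqsubseteq> g \<Longrightarrow> v = g"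
    using g by (auto simp: graver_basis_def lam0)
  have lM: "lift c g \<in> ?M" using lift_Mon[OF latt symL gL] .
  have pl: "phi c (lift c g) = g" using phi_lift[OF latt symL gL] .
  have "lift c g \<noteq> 0"
  proof
    assume "lift c g = 0"
    then have "g = phi c 0" using pl by simp
    then show False using g0 phi_zero by simp
  qed
  moreover have "a = 0 \<or> b = 0" if ab: "a \<in> ?M" "b \<in> ?M" "lift c g = a + b" for a b
  proof -
    have nn: "\<forall>x. 0 \<le> a x" "\<forall>x. 0 \<le> b x" using ab by (auto simp: Mon_def)
    have lea: "\<forall>x. a x \<le> lift c g x" "\<forall>x. b x \<le> lift c g x" using ab(3) nn by (auto simp: fun_eq_iff)
    have pa: "phi c a \<in> L" "phi c b \<in> L" using ab by (auto simp: Mon_def)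
    have sum: "phi c a + phi c b = g" using pl unfolding ab(3) phi_add .
    show ?thesis
    proof (cases "phi c a = 0")
      case True then show ?thesis using w_pair0[OF ab(1) lea(1)] by simp
    next
      case False
      have "phi c a = g" by (rule gmin[OF pa(1) False w_conf[OF ab(1) lea(1)]])
      then have "phi c b = 0" using sum by simp
      then show ?thesis using w_pair0[OF ab(2) lea(2)] by simp
    qed
  qed
  ultimately show ?thesis using lM by (auto simp: Irr_def)
qed

lemma diag_split:
  assumes w: "w \<in> Irr (Mon d c L)" and j: "1 \<le> j" "j \<le> c"
    and n1: "w (xs, j) \<noteq> 0" and n2: "w (xs, j + c) \<noteq> 0"
  shows "w = diag c (xs, j) \<and> (xs, j) \<in> Idx d c"
proof -
  let ?M = "Mon d c L"
  let ?D = "diag c (xs, j)"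
  have wM: "w \<in> ?M" and w0: "w \<noteq> 0" and irr: "\<And>a b. a \<in> ?M \<Longrightarrow> b \<in> ?M \<Longrightarrow> w = a + b \<Longrightarrow> a = 0 \<or> b = 0"
    using w by (auto simp: Irr_def)
  have wV: "w \<in> Vec d (2 * c)" and nn: "\<forall>x. 0 \<le> w x" and pw: "phi c w \<in> L" using wM by (auto simp: Mon_def)
  have "(xs, j) \<in> Idx d (2 * c)" using wV n1 by (auto simp: Vec_def)
  then have x: "(xs, j) \<in> Idx d c" using j by (auto simp: Idx_def)
  have DM: "?D \<in> ?M" using diag_Mon[OF latt symL x] j by simp
  have pD: "phi c ?D = 0" using x j by (auto simp: phi_def diag_def fun_eq_iff)
  have g1: "1 \<le> w (xs, j)" "1 \<le> w (xs, j + c)" using n1 n2 nn[rule_format, of "(xs, j)"] nn[rule_format, of "(xs, j + c)"] by auto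
  have "w - ?D \<in> ?M"
    unfolding Mon_def
  proof (intro CollectI conjI allI)
    show "w - ?D \<in> Vec d (2 * c)" using Vec_diff[OF wV] DM by (simp add: Mon_def)
    fix y have "0 \<le> w y" using nn by blast
    then show "0 \<le> (w - ?D) y" using g1 by (auto simp: diag_def)
  next
    show "phi c (w - ?D) \<in> L" using pw pD by (simp add: phi_diff)
  qed
  moreover have "w = ?D + (w - ?D)" by simp
  moreover have "?D \<noteq> 0" by (auto simp: diag_def fun_eq_iff)
  ultimately have "w - ?D = 0" using irr DM by blast
  then show ?thesis using x by simp
qed

lemma Irr_phi_nz: assumes w: "w \<in> Irr (Mon d c L)" and p: "phi c w \<noteq> 0"
  shows "w = lift c (phi c w)" and "phi c w \<in> graver_basis L"
proof -
  let ?M = "Mon d c L"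
  have wM: "w \<in> ?M" and irr: "\<And>a b. a \<in> ?M \<Longrightarrow> b \<in> ?M \<Longrightarrow> w = a + b \<Longrightarrow> a = 0 \<or> b = 0"
    using w by (auto simp: Irr_def)
  have wV: "w \<in> Vec d (2 * c)" and nn: "\<forall>x. 0 \<le> w x" and pw: "phi c w \<in> L" using wM by (auto simp: Mon_def)
  have one0: "w (xs, j) = 0 \<or> w (xs, j + c) = 0" if j: "1 \<le> j" "j \<le> c" for xs j
  proof (rule ccontr)
    assume "\<not> ?thesis"
    then have "w = diag c (xs, j)" using diag_split[OF w j] by auto
    moreover have "phi c (diag c (xs, j)) = 0" using j by (auto simp: phi_def diag_def fun_eq_iff)
    ultimately show False using p by simp
  qed
  show wl: "w = lift c (phi c w)"
  proof (rule ext, clarify)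
    fix xs j
    show "w (xs, j) = lift c (phi c w) (xs, j)"
    proof (cases "1 \<le> j \<and> j \<le> c")
      case True
      then show ?thesis using one0[of j xs] nn by (auto simp: lift_def phi_def)
    next
      case F: False
      show ?thesis
      proof (cases "c < j \<and> j \<le> 2 * c")
        case True
        then have jj: "1 \<le> j - c" "j - c \<le> c" "j - c + c = j" by auto
        then show ?thesis using one0[of "j - c" xs] nn True by (auto simp: lift_def phi_def)
      next
        case False
        then have "(xs, j) \<notin> Idx d (2 * c)" using F by (auto simp: Idx_def)
        then have "w (xs, j) = 0" using Vec_out[OF wV] by simp
        then show ?thesis using F False by (auto simp: lift_def)
      qed
    qed
  qed
  have "v = phi c w" if v: "v \<in> L" "v \<noteq> 0" "v \<sqsubseteq> phi c w" for v
  proof -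
    have "w = lift c v + lift c (phi c w - v)" using wl lift_conf[OF v(3)] by (rule trans)
    moreover have "lift c v \<in> ?M" "lift c (phi c w - v) \<in> ?M"
      using lift_Mon[OF latt symL] v(1) pw Ldiff[OF latt symL] by auto
    ultimately have "lift c v = 0 \<or> lift c (phi c w - v) = 0" using irr by blast
    moreover have "phi c (lift c v) = v" "phi c (lift c (phi c w - v)) = phi c w - v"
      using phi_lift[OF latt symL] v(1) pw Ldiff[OF latt symL] by auto
    ultimately show ?thesis
    proof (elim disjE conjE)
      assume "lift c v = 0" "phi c (lift c v) = v"
      then have "v = 0" using phi_zero by simp
      then show ?thesis using v(2) by simp
    next
      assume "lift c (phi c w - v) = 0" "phi c (lift c (phi c w - v)) = phi c w - v"
      then have "phi c w - v = 0" using phi_zero by simp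
      then show ?thesis by simp
    qed
  qed
  then show "phi c w \<in> graver_basis L" using pw p by (auto simp: graver_basis_def lam0)
qed

lemma Irr_phi_z: assumes w: "w \<in> Irr (Mon d c L)" and p: "phi c w = 0"
  shows "\<exists>x\<in>Idx d c. w = diag c x"
proof -
  have wM: "w \<in> Mon d c L" and w0: "w \<noteq> 0" using w by (auto simp: Irr_def)
  have wV: "w \<in> Vec d (2 * c)" using wM by (auto simp: Mon_def)
  obtain xs j where nz: "w (xs, j) \<noteq> 0" using w0 by (auto simp: fun_eq_iff)
  then have I: "(xs, j) \<in> Idx d (2 * c)" using wV by (auto simp: Vec_def)
  have eqc: "w (xs, k) = w (xs, k + c)" if "1 \<le> k" "k \<le> c" for k
    using fun_cong[OF p, of "(xs, k)"] that by (simp add: phi_def)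
  obtain k where k: "1 \<le> k" "k \<le> c" "w (xs, k) \<noteq> 0" "w (xs, k + c) \<noteq> 0"
  proof (cases "j \<le> c")
    case True
    then show ?thesis using that[of j] I nz eqc[of j] by (auto simp: Idx_def)
  next
    case False
    then have "1 \<le> j - c" "j - c \<le> c" "j - c + c = j" using I by (auto simp: Idx_def)
    then show ?thesis using that[of "j - c"] nz eqc[of "j - c"] by auto
  qed
  then show ?thesis using diag_split[OF w k(1,2,3,4)] by blast
qed

end

theorem corollary4p12:
  fixes c d :: nat and L :: "vec set"
  assumes "1 \<le> c" and "1 \<le> d"
    and "lattice d c L" and "sym_invariant L"
  shows "(\<exists>H. finite H \<and> equivariant_hilbert_basis H (Mon d c L)) \<longleftrightarrow>
         (\<exists>G. finite G \<and> equivariant_graver_basis G L)"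
proof -
  note latt = assms(3) and symL = assms(4)
  let ?M = "Mon d c L"
  have ehb: "equivariant_hilbert_basis H ?M \<longleftrightarrow> orbit H = Irr ?M" for H
    unfolding equivariant_hilbert_basis_def using hilbert_iff[OF posmon_Mon[OF latt symL]] .
  show ?thesis
  proof
    assume "\<exists>H. finite H \<and> equivariant_hilbert_basis H ?M"
    then obtain H where fH: "finite H" and oH: "orbit H = Irr ?M" using ehb by blast
    define G where "G = phi c ` H - {0}"
    have "finite G" using fH by (simp add: G_def)
    moreover have "orbit G = graver_basis L"
    proof
      show "orbit G \<subseteq> graver_basis L"
      proof
        fix y assume "y \<in> orbit G"
        then obtain \<sigma> g where s: "\<sigma> \<in> Sym" "g \<in> G" "y = act \<sigma> g" by (auto simp: orbit_def)
        then obtain h where h: "h \<in> H" "g = phi c h" "g \<noteq> 0" by (auto simp: G_def)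
        have y: "y = phi c (act \<sigma> h)" using s h by (simp add: phi_act)
        have "act \<sigma> h \<in> Irr ?M" using oH s h by (auto simp: orbit_def)
        moreover have "phi c (act \<sigma> h) \<noteq> 0" using act_eq_zero[OF s(1), of "phi c h"] h by (simp add: phi_act)
        ultimately show "y \<in> graver_basis L" using Irr_phi_nz(2)[OF latt symL] y by blast
      qed
    next
      show "graver_basis L \<subseteq> orbit G"
      proof
        fix g assume g: "g \<in> graver_basis L"
        then have gL: "g \<in> L" and g0: "g \<noteq> 0" by (auto simp: graver_basis_def lam0)
        have "lift c g \<in> orbit H" using graver_lift_Irr[OF latt symL g] oH by simp
        then obtain \<sigma> h where s: "\<sigma> \<in> Sym" "h \<in> H" "lift c g = act \<sigma> h" by (auto simp: orbit_def)
        have "g = act \<sigma> (phi c h)"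
          using phi_lift[OF latt symL gL] s(3) by (simp add: phi_act)
        moreover have "phi c h \<noteq> 0" using g0 calculation by (auto simp: act_zero)
        ultimately show "g \<in> orbit G" using s unfolding orbit_def G_def by blast
      qed
    qed
    ultimately show "\<exists>G. finite G \<and> equivariant_graver_basis G L"
      unfolding equivariant_graver_basis_def by blast
  next
    assume "\<exists>G. finite G \<and> equivariant_graver_basis G L"
    then obtain G where fG: "finite G" and oG: "orbit G = graver_basis L"
      unfolding equivariant_graver_basis_def by blast
    define Rep where "Rep = {xs. set xs \<subseteq> {1..d} \<and> length xs = d} \<times> {1..c}"
    define H where "H = lift c ` G \<union> diag c ` {x \<in> Rep. diag c x \<in> Irr ?M}"
    have "finite Rep" unfolding Rep_def by (intro finite_cartesian_product finite_lists_length_eq) auto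
    then have "finite H" using fG unfolding H_def by auto
    moreover have "orbit H = Irr ?M"
    proof
      show "orbit H \<subseteq> Irr ?M"
      proof
        fix y assume "y \<in> orbit H"
        then obtain \<sigma> h where s: "\<sigma> \<in> Sym" "h \<in> H" "y = act \<sigma> h" by (auto simp: orbit_def)
        show "y \<in> Irr ?M"
        proof (cases "h \<in> lift c ` G")
          case True
          then obtain g where g: "g \<in> G" "h = lift c g" by auto
          have "act \<sigma> g \<in> graver_basis L" using oG s g unfolding orbit_def by blast
          then have "lift c (act \<sigma> g) \<in> Irr ?M" by (rule graver_lift_Irr[OF latt symL])
          then show ?thesis using s(3) g(2) by (simp only: lift_act[OF latt symL, symmetric])
        next
          case False
          then have "h \<in> Irr ?M" using s(2) unfolding H_def by auto
          then show ?thesis using Irr_inv[OF latt symL s(1)] s(3) by simp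
        qed
      qed
    next
      show "Irr ?M \<subseteq> orbit H"
      proof
        fix w assume w: "w \<in> Irr ?M"
        show "w \<in> orbit H"
        proof (cases "phi c w = 0")
          case False
          have wl: "w = lift c (phi c w)" and pg: "phi c w \<in> graver_basis L"
            using Irr_phi_nz[OF latt symL w False] by auto
          then obtain \<sigma> g where s: "\<sigma> \<in> Sym" "g \<in> G" "phi c w = act \<sigma> g"
            using oG unfolding orbit_def by blast
          have "w = lift c (act \<sigma> g)" using wl unfolding s(3) .
          also have "\<dots> = act \<sigma> (lift c g)" by (rule lift_act[OF latt symL])
          finally have "w = act \<sigma> (lift c g)" .
          moreover have "lift c g \<in> H" using s(2) unfolding H_def by auto
          ultimately show ?thesis using s(1) unfolding orbit_def by blast
        next
          case True
          then obtain xs j where x: "(xs, j) \<in> Idx d c" "w = diag c (xs, j)"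
            using Irr_phi_z[OF latt symL w] by auto
          have xs: "length xs = d" "\<forall>i\<in>set xs. 1 \<le> i" "1 \<le> j" "j \<le> c" using x(1) by (auto simp: Idx_def)
          obtain \<sigma> where s: "\<sigma> \<in> Sym" "set (map \<sigma> xs) \<subseteq> {1..length xs}"
            using Sym_normalize[OF xs(2)] by blast
          have r: "(map \<sigma> xs, j) \<in> Rep" using s xs unfolding Rep_def by auto
          have aw: "act \<sigma> w = diag c (map \<sigma> xs, j)" using act_diag[OF latt symL s(1)] x(2) by simp
          have "diag c (map \<sigma> xs, j) \<in> Irr ?M" using Irr_inv[OF latt symL s(1) w] aw by simp
          then have inH: "diag c (map \<sigma> xs, j) \<in> H" using r unfolding H_def by blast
          have "w = act (inv \<sigma>) (diag c (map \<sigma> xs, j))" using act_inv_act[OF s(1), of w] aw by simp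
          then show ?thesis using inH Sym_inv_Sym[OF s(1)] unfolding orbit_def by blast
        qed
      qed
    qed
    ultimately show "\<exists>H. finite H \<and> equivariant_hilbert_basis H ?M" using ehb by blast
  qed
qed

end
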